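(* Suppose Assumptions 1 and 2 hold. Then the modified dual function $g^m(\lambda)=\sum_{i=1}^N g_i^m(\lambda)$, where $g_i^m(\lambda)=\mathcal{L}^r_i(\hat{x}_i(\lambda),\lambda)$, is continuously differentiable and concave on all of $\mathbb{R}$.
   Context: For $i=1,\dots,N$: $d_i\in\mathbb{R}$, $\mathcal{X}_i=[\underline{x}_i,\bar{x}_i]$ a nonempty closed interval, $f_i,\phi_i:\mathbb{R}\to\mathbb{R}$. Assumption 1: for each $i$, $f_i$ and $\phi_i$ are continuously differentiable, $f_i$ is strictly convex on $\mathcal{X}_i$, $\phi_i$ is convex on $\mathcal{X}_i$, and $\phi_i'(x_i)<1$ for all $x_i\in\mathcal{X}_i$. Assumption 2: $f_i'(x_i)>0$ for all $x_i\in\mathcal{X}_i$ and all $i$. Local Lagrangian: $\mathcal{L}^r_i(x_i,\lambda)=f_i(x_i)+\lambda\big(d_i-x_i+\phi_i(x_i)\big)$. Let $v_i(x_i)=f_i'(x_i)(1-\phi_i'(x_i))^{-1}$ on $\mathcal{X}_i$ (strictly increasing under the assumptions). Define for $\lambda\in\mathbb{R}$: $\hat{x}_i(\lambda)=\underline{x}_i$ if $\lambda\le v_i(\underline{x}_i)$; $\hat{x}_i(\lambda)=v_i^{-1}(\lambda)$ if $v_i(\underline{x}_i)<\lambda<v_i(\bar{x}_i)$; $\hat{x}_i(\lambda)=\bar{x}_i$ if $\lambda\ge v_i(\bar{x}_i)$. *)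

theory Defs
  imports "HOL-Analysis.Analysis"
begin

definition strict_convex_on :: "real set \<Rightarrow> (real \<Rightarrow> real) \<Rightarrow> bool" where
  "strict_convex_on S f \<longleftrightarrow>
     (\<forall>x\<in>S. \<forall>y\<in>S. \<forall>u::real. x \<noteq> y \<and> 0 < u \<and> u < 1 \<longrightarrow>
        f (u * x + (1 - u) * y) < u * f x + (1 - u) * f y)"

definition vfun :: "(real \<Rightarrow> real) \<Rightarrow> (real \<Rightarrow> real) \<Rightarrow> real \<Rightarrow> real" where
  "vfun f \<phi> x = deriv f x / (1 - deriv \<phi> x)"

definition xhat :: "(real \<Rightarrow> real) \<Rightarrow> (real \<Rightarrow> real) \<Rightarrow> real \<Rightarrow> real \<Rightarrow> real \<Rightarrow> real" where
  "xhat f \<phi> xl xu lam =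
     (if lam \<le> vfun f \<phi> xl then xl
      else if lam \<ge> vfun f \<phi> xu then xu
      else (THE x. x \<in> {xl..xu} \<and> vfun f \<phi> x = lam))"

definition local_lagr :: "(real \<Rightarrow> real) \<Rightarrow> (real \<Rightarrow> real) \<Rightarrow> real \<Rightarrow> real \<Rightarrow> real \<Rightarrow> real" where
  "local_lagr f \<phi> d x lam = f x + lam * (d - x + \<phi> x)"

definition gm :: "nat \<Rightarrow> (nat \<Rightarrow> real \<Rightarrow> real) \<Rightarrow> (nat \<Rightarrow> real \<Rightarrow> real) \<Rightarrow> (nat \<Rightarrow> real)
                   \<Rightarrow> (nat \<Rightarrow> real) \<Rightarrow> (nat \<Rightarrow> real) \<Rightarrow> real \<Rightarrow> real" where
  "gm N f \<phi> d xl xu lam =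
     (\<Sum>i\<in>{1..N}. local_lagr (f i) (\<phi> i) (d i) (xhat (f i) (\<phi> i) (xl i) (xu i) lam) lam)"

end

theory Submission imports Defs begin

lemma secant_deriv:
  fixes g :: "real \<Rightarrow> real"
  assumes cv: "convex_on {a..b} g" and xy: "a \<le> x" "x < y" "y \<le> b"
    and dx: "(g has_real_derivative Dx) (at x)" and dy: "(g has_real_derivative Dy) (at y)"
  shows "Dx \<le> (g y - g x) / (y - x)" and "(g y - g x) / (y - x) \<le> Dy"
proof -
  have cv': "convex_on {x..y} g"
    by (rule convex_on_subset[OF cv]) (use xy in auto)
  have "((\<lambda>t. (g t - g x) / (t - x)) \<longlongrightarrow> Dx) (at x)"
    using dx by (simp add: has_field_derivative_iff)
  hence L1: "((\<lambda>t. (g t - g x) / (t - x)) \<longlongrightarrow> Dx) (at_right x)"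
    by (rule tendsto_mono[rotated]) (simp add: at_le)
  have "eventually (\<lambda>t. (g t - g x) / (t - x) \<le> (g y - g x) / (y - x)) (at_right x)"
    using eventually_at_right_real[OF xy(2)]
  proof eventually_elim
    case (elim t)
    hence "g t \<le> (g y - g x) / (y - x) * (t - x) + g x"
      using convex_onD_Icc'[OF cv', of t] by auto
    thus ?case using elim by (simp add: divide_le_eq)
  qed
  thus "Dx \<le> (g y - g x) / (y - x)"
    by (intro tendsto_upperbound[OF L1]) auto
  have "((\<lambda>t. (g t - g y) / (t - y)) \<longlongrightarrow> Dy) (at y)"
    using dy by (simp add: has_field_derivative_iff)
  hence L2: "((\<lambda>t. (g t - g y) / (t - y)) \<longlongrightarrow> Dy) (at_left y)"
    by (rule tendsto_mono[rotated]) (simp add: at_le)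
  have "eventually (\<lambda>t. (g y - g x) / (y - x) \<le> (g t - g y) / (t - y)) (at_left y)"
    using eventually_at_left_real[OF xy(2)]
  proof eventually_elim
    case (elim t)
    hence "g t \<le> (g x - g y) / (y - x) * (y - t) + g y"
      using convex_onD_Icc''[OF cv', of t] by auto
    hence "g t - g y \<le> (g x - g y) / (y - x) * (y - t)" by simp
    hence "(g t - g y) / (y - t) \<le> (g x - g y) / (y - x)"
      using elim by (simp add: divide_le_eq mult.commute)
    thus ?case using elim
      by (smt (verit, ccfv_SIG) minus_divide_divide minus_divide_left)
  qed
  thus "(g y - g x) / (y - x) \<le> Dy"
    by (intro tendsto_lowerbound[OF L2]) auto
qed

lemma strict_imp_convex:
  assumes "strict_convex_on {a..b} (g::real\<Rightarrow>real)"
  shows "convex_on {a..b} g"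
proof (rule convex_on_linorderI)
  fix t x y :: real assume h: "0 < t" "t < 1" "x \<in> {a..b}" "y \<in> {a..b}" "x < y"
  have "g ((1 - t) * x + (1 - (1 - t)) * y) < (1 - t) * g x + (1 - (1 - t)) * g y"
    proof -
    have "\<forall>u. x \<noteq> y \<and> 0 < u \<and> u < 1 \<longrightarrow> g (u * x + (1 - u) * y) < u * g x + (1 - u) * g y"
      using assms h(3,4) unfolding strict_convex_on_def by blast
    hence "x \<noteq> y \<and> 0 < 1 - t \<and> 1 - t < 1 \<longrightarrow> g ((1 - t) * x + (1 - (1 - t)) * y) < (1 - t) * g x + (1 - (1 - t)) * g y"
      by (rule spec)
    thus ?thesis using h by simp
  qed
  thus "g ((1 - t) *\<^sub>R x + t *\<^sub>R y) \<le> (1 - t) * g x + t * g y" by simp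
qed simp


locale comp =
  fixes f \<phi> :: "real \<Rightarrow> real" and dd a b :: real and F P :: "real \<Rightarrow> real"
  assumes ab: "a \<le> b"
    and fD: "\<And>x. (f has_real_derivative F x) (at x)" and Fc: "continuous_on UNIV F"
    and pD: "\<And>x. (\<phi> has_real_derivative P x) (at x)" and Pc: "continuous_on UNIV P"
    and fsc: "strict_convex_on {a..b} f" and pcv: "convex_on {a..b} \<phi>"
    and Plt: "\<And>x. x \<in> {a..b} \<Longrightarrow> P x < 1"
    and Fpos: "\<And>x. x \<in> {a..b} \<Longrightarrow> F x > 0"
begin

definition v where "v x = F x / (1 - P x)"

lemma vfun_eq: "vfun f \<phi> x = v x"
  unfolding vfun_def v_def using DERIV_imp_deriv[OF fD] DERIV_imp_deriv[OF pD] by simp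

lemma F_strict: assumes "a \<le> x" "x < y" "y \<le> b" shows "F x < F y"
proof -
  define m where "m = (x + y) / 2"
  have m: "x < m" "m < y" using assms by (auto simp: m_def)
  have fcv: "convex_on {a..b} f" by (rule strict_imp_convex[OF fsc])
  have 1: "F x \<le> (f m - f x) / (m - x)"
    by (rule secant_deriv(1)[OF fcv _ _ _ fD fD]) (use assms m in auto)
  have 2: "(f y - f m) / (y - m) \<le> F y"
    by (rule secant_deriv(2)[OF fcv _ _ _ fD fD]) (use assms m in auto)
  have "\<forall>u. x \<noteq> y \<and> 0 < u \<and> u < 1 \<longrightarrow> f (u * x + (1 - u) * y) < u * f x + (1 - u) * f y"
    using fsc assms unfolding strict_convex_on_def by auto
  hence "x \<noteq> y \<and> 0 < (1/2::real) \<and> (1/2::real) < 1 \<longrightarrow> f ((1/2) * x + (1 - 1/2) * y) < (1/2) * f x + (1 - 1/2) * f y" by (rule spec)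
  hence "f ((1/2) * x + (1 - 1/2) * y) < (1/2) * f x + (1 - 1/2) * f y" using assms by simp
  hence "f m < (f x + f y) / 2" by (simp add: m_def field_simps)
  moreover have "m - x = y - m" "m - x > 0" using m by (auto simp: m_def field_simps)
  ultimately have "(f m - f x) / (m - x) < (f y - f m) / (y - m)"
  proof -
    assume h: "f m < (f x + f y) / 2" "m - x = y - m" "m - x > 0"
    have "f m - f x < f y - f m" using h(1) by (simp add: field_simps)
    hence "(f m - f x) / (m - x) < (f y - f m) / (m - x)" using h(3) by (rule divide_strict_right_mono)
    thus ?thesis by (simp only: h(2)[symmetric])
  qed
  with 1 2 show ?thesis by linarith
qed

lemma P_mono: assumes "a \<le> x" "x \<le> y" "y \<le> b" shows "P x \<le> P y"
proof (cases "x = y")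
  case False
  hence xy: "x < y" using assms by auto
  have 1: "P x \<le> (\<phi> y - \<phi> x) / (y - x)"
    by (rule secant_deriv(1)[OF pcv _ _ _ pD pD]) (use assms xy in auto)
  have 2: "(\<phi> y - \<phi> x) / (y - x) \<le> P y"
    by (rule secant_deriv(2)[OF pcv _ _ _ pD pD]) (use assms xy in auto)
  from 1 2 show ?thesis by linarith
qed simp

lemma v_strict: assumes "a \<le> x" "x < y" "y \<le> b" shows "v x < v y"
proof -
  have Fx: "0 < F x" "F x < F y" using Fpos F_strict[OF assms] assms by auto
  have Px: "P x \<le> P y" "P y < 1" using P_mono assms Plt by auto
  have "F x / (1 - P x) \<le> F x / (1 - P y)"
    using Fx Px by (intro divide_left_mono) auto
  also have "\<dots> < F y / (1 - P y)"
    using Fx Px by (intro divide_strict_right_mono) auto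
  finally show ?thesis by (simp add: v_def)
qed

lemma v_mono: assumes "a \<le> x" "x \<le> y" "y \<le> b" shows "v x \<le> v y"
  using v_strict[of x y] assms by (cases "x = y") auto

lemma v_cont: "continuous_on {a..b} v"
  unfolding v_def
proof (rule continuous_on_divide)
  show "continuous_on {a..b} F" using Fc by (rule continuous_on_subset) auto
  show "continuous_on {a..b} (\<lambda>x. 1 - P x)"
    by (intro continuous_on_diff continuous_on_const continuous_on_subset[OF Pc]) auto
  show "\<forall>x\<in>{a..b}. 1 - P x \<noteq> 0" using Plt by force
qed

definition X where "X lam = xhat f \<phi> a b lam"

lemma X_char: "X lam \<in> {a..b} \<and> (X lam > a \<longrightarrow> v (X lam) \<le> lam) \<and> (X lam < b \<longrightarrow> v (X lam) \<ge> lam)"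
proof (cases "lam \<le> v a")
  case True
  hence "X lam = a" unfolding X_def xhat_def vfun_eq by (rule if_P)
  thus ?thesis using ab True by simp
next
  case c1: False
  show ?thesis
  proof (cases "lam \<ge> v b")
    case True
    hence "X lam = b" using c1 unfolding X_def xhat_def vfun_eq by simp
    thus ?thesis using ab True by simp
  next
    case c2: False
    obtain x where x: "a \<le> x" "x \<le> b" "v x = lam"
      using IVT'[of v a lam b] c1 c2 ab v_cont by auto
    have uniq: "y = x" if "y \<in> {a..b}" "v y = lam" for y
    proof (rule ccontr)
      assume "y \<noteq> x"
      hence "y < x \<or> x < y" by linarith
      thus False using that x v_strict[of x y] v_strict[of y x] by auto
    qed
    have "(THE x. x \<in> {a..b} \<and> vfun f \<phi> x = lam) = x"
      unfolding vfun_eq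
    proof (rule the_equality)
      show "x \<in> {a..b} \<and> v x = lam" using x by simp
      show "\<And>y. y \<in> {a..b} \<and> v y = lam \<Longrightarrow> y = x" using uniq by blast
    qed
    hence "X lam = x" using c1 c2 unfolding X_def xhat_def vfun_eq by simp
    thus ?thesis using x by simp
  qed
qed


lemma X_in: "X lam \<in> {a..b}" using X_char by blast

lemma L_deriv: "((\<lambda>t. local_lagr f \<phi> dd t lam) has_real_derivative (F t - lam * (1 - P t))) (at t)"
proof -
  have "((\<lambda>t. f t + lam * (dd - t + \<phi> t)) has_real_derivative (F t + lam * (0 - 1 + P t))) (at t)"
    by (intro DERIV_add DERIV_cmult DERIV_diff DERIV_const DERIV_ident fD pD)
  thus ?thesis unfolding local_lagr_def by (simp add: algebra_simps)
qed

lemma sign_ge: assumes "t \<in> {a..b}" "lam \<le> v t" shows "0 \<le> F t - lam * (1 - P t)"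
proof -
  have "0 < 1 - P t" using Plt assms by auto
  thus ?thesis using assms(2) unfolding v_def by (simp add: le_divide_eq)
qed

lemma sign_le: assumes "t \<in> {a..b}" "v t \<le> lam" shows "F t - lam * (1 - P t) \<le> 0"
proof -
  have "0 < 1 - P t" using Plt assms by auto
  thus ?thesis using assms(2) unfolding v_def by (simp add: divide_le_eq)
qed

lemma X_min: assumes x: "x \<in> {a..b}"
  shows "local_lagr f \<phi> dd (X lam) lam \<le> local_lagr f \<phi> dd x lam"
proof -
  define x0 where "x0 = X lam"
  have x0: "x0 \<in> {a..b}" "x0 > a \<longrightarrow> v x0 \<le> lam" "x0 < b \<longrightarrow> v x0 \<ge> lam"
    using X_char unfolding x0_def by auto
  consider "x0 < x" | "x = x0" | "x < x0" by linarith
  thus ?thesis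
  proof cases
    case 1
    have "local_lagr f \<phi> dd x0 lam \<le> local_lagr f \<phi> dd x lam"
    proof (rule DERIV_nonneg_imp_nondecreasing[of x0 x])
      show "x0 \<le> x" using 1 by simp
      fix t assume t: "x0 \<le> t" "t \<le> x"
      have tin: "t \<in> {a..b}" using t x0 x by auto
      have "lam \<le> v x0" using x0 1 x by auto
      also have "v x0 \<le> v t" using v_mono[of x0 t] t x0 x by auto
      finally show "\<exists>y. ((\<lambda>t. local_lagr f \<phi> dd t lam) has_real_derivative y) (at t) \<and> 0 \<le> y"
        using L_deriv sign_ge[OF tin] by blast
    qed
    thus ?thesis by (simp add: x0_def)
  next
    case 2 thus ?thesis by (simp add: x0_def)
  next
    case 3
    have "local_lagr f \<phi> dd x lam \<ge> local_lagr f \<phi> dd x0 lam"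
    proof (rule DERIV_nonpos_imp_nonincreasing[of x x0])
      show "x \<le> x0" using 3 by simp
      fix t assume t: "x \<le> t" "t \<le> x0"
      have tin: "t \<in> {a..b}" using t x0 x by auto
      have "v t \<le> v x0" using v_mono[of t x0] t x0 x by auto
      also have "v x0 \<le> lam" using x0 3 x by auto
      finally show "\<exists>y. ((\<lambda>t. local_lagr f \<phi> dd t lam) has_real_derivative y) (at t) \<and> y \<le> 0"
        using L_deriv sign_le[OF tin] by blast
    qed
    thus ?thesis by (simp add: x0_def)
  qed
qed

lemma X_cont: "continuous_on UNIV X"
proof (rule continuous_at_imp_continuous_on, intro ballI)
  fix l0 :: real assume "l0 \<in> UNIV"
  show "isCont X l0"
    unfolding continuous_at_eps_delta
  proof (intro allI impI)
    fix e :: real assume e: "e > 0"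
    define x0 where "x0 = X l0"
    have x0: "x0 \<in> {a..b}" "x0 > a \<longrightarrow> v x0 \<le> l0" "x0 < b \<longrightarrow> v x0 \<ge> l0"
      using X_char unfolding x0_def by auto
    obtain d1 where d1: "d1 > 0" "\<And>\<mu>. \<mu> < l0 + d1 \<Longrightarrow> X \<mu> < x0 + e"
    proof (cases "x0 < b")
      case True
      define bb where "bb = min b (x0 + e/2)"
      have bb: "x0 < bb" "bb \<le> b" "bb \<le> x0 + e/2" using True e by (auto simp: bb_def)
      have "v x0 < v bb" using v_strict[of x0 bb] x0 bb by auto
      hence pos: "v bb - l0 > 0" using x0 True by auto
      have "X \<mu> < x0 + e" if "\<mu> < l0 + (v bb - l0)" for \<mu>
      proof (rule ccontr)
        assume "\<not> X \<mu> < x0 + e"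
        hence gt: "bb < X \<mu>" using bb e by auto
        have Xm: "X \<mu> \<in> {a..b}" "X \<mu> > a \<longrightarrow> v (X \<mu>) \<le> \<mu>" using X_char by auto
        have "v bb < v (X \<mu>)" using v_strict[of bb "X \<mu>"] gt Xm x0 bb by auto
        moreover have "v (X \<mu>) \<le> \<mu>" using Xm gt x0 bb by auto
        ultimately show False using that by simp
      qed
      thus ?thesis using that pos by blast
    next
      case False
      hence "x0 = b" using x0 by auto
      hence "X \<mu> < x0 + e" for \<mu> using X_char[of \<mu>] e by auto
      thus ?thesis using that[of 1] by auto
    qed
    obtain d2 where d2: "d2 > 0" "\<And>\<mu>. \<mu> > l0 - d2 \<Longrightarrow> X \<mu> > x0 - e"
    proof (cases "x0 > a")
      case True
      define aa where "aa = max a (x0 - e/2)"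
      have aa: "aa < x0" "a \<le> aa" "x0 - e/2 \<le> aa" using True e by (auto simp: aa_def)
      have "v aa < v x0" using v_strict[of aa x0] x0 aa by auto
      hence pos: "l0 - v aa > 0" using x0 True by auto
      have "X \<mu> > x0 - e" if "\<mu> > l0 - (l0 - v aa)" for \<mu>
      proof (rule ccontr)
        assume "\<not> X \<mu> > x0 - e"
        hence lt: "X \<mu> < aa" using aa e by auto
        have Xm: "X \<mu> \<in> {a..b}" "X \<mu> < b \<longrightarrow> v (X \<mu>) \<ge> \<mu>" using X_char by auto
        have "v (X \<mu>) < v aa" using v_strict[of "X \<mu>" aa] lt Xm x0 aa by auto
        moreover have "v (X \<mu>) \<ge> \<mu>" using Xm lt x0 aa by auto
        ultimately show False using that by simp
      qed
      thus ?thesis using that pos by blast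
    next
      case False
      hence "x0 = a" using x0 by auto
      hence "X \<mu> > x0 - e" for \<mu> using X_char[of \<mu>] e by auto
      thus ?thesis using that[of 1] by auto
    qed
    show "\<exists>d>0. \<forall>x'. dist x' l0 < d \<longrightarrow> dist (X x') (X l0) < e"
    proof (intro exI[of _ "min d1 d2"] conjI allI impI)
      show "min d1 d2 > 0" using d1 d2 by simp
      fix x' assume "dist x' l0 < min d1 d2"
      hence "x' < l0 + d1" "x' > l0 - d2" by (auto simp: dist_real_def)
      thus "dist (X x') (X l0) < e"
        using d1(2)[of x'] d2(2)[of x'] by (auto simp: dist_real_def x0_def)
    qed
  qed
qed

definition G where "G l = local_lagr f \<phi> dd (X l) l"
definition h where "h l = dd - X l + \<phi> (X l)"

lemma h_cont: "continuous_on UNIV h"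
proof -
  have pc: "continuous_on UNIV \<phi>"
    by (rule continuous_at_imp_continuous_on) (use DERIV_isCont[OF pD] in blast)
  have "continuous_on UNIV (\<lambda>l. \<phi> (X l))"
    by (rule continuous_on_compose2[OF pc X_cont]) auto
  thus ?thesis unfolding h_def
    by (intro continuous_intros X_cont)
qed

lemma lin: "local_lagr f \<phi> dd w m - local_lagr f \<phi> dd w l = (m - l) * (dd - w + \<phi> w)"
  unfolding local_lagr_def by (simp add: algebra_simps)

lemma G_deriv: "(G has_real_derivative h l0) (at l0)"
proof -
  have ineq: "h \<mu> \<le> (G \<mu> - G l0) / (\<mu> - l0) \<and> (G \<mu> - G l0) / (\<mu> - l0) \<le> h l0 \<or>
              h l0 \<le> (G \<mu> - G l0) / (\<mu> - l0) \<and> (G \<mu> - G l0) / (\<mu> - l0) \<le> h \<mu>"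
    if ne: "\<mu> \<noteq> l0" for \<mu>
  proof -
    have up: "G \<mu> - G l0 \<le> (\<mu> - l0) * h l0"
      using X_min[OF X_in, of \<mu> l0] lin[of "X l0" \<mu> l0] unfolding G_def h_def by linarith
    have lo: "(\<mu> - l0) * h \<mu> \<le> G \<mu> - G l0"
      using X_min[OF X_in, of l0 \<mu>] lin[of "X \<mu>" l0 \<mu>] unfolding G_def h_def
      by (simp add: algebra_simps)
    show ?thesis
    proof (cases "\<mu> > l0")
      case True
      hence "h \<mu> \<le> (G \<mu> - G l0) / (\<mu> - l0)" "(G \<mu> - G l0) / (\<mu> - l0) \<le> h l0"
        using up lo by (simp_all add: le_divide_eq divide_le_eq mult.commute)
      thus ?thesis by blast
    next
      case False
      hence neg: "\<mu> - l0 < 0" using ne by simp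
      hence "h l0 \<le> (G \<mu> - G l0) / (\<mu> - l0)" "(G \<mu> - G l0) / (\<mu> - l0) \<le> h \<mu>"
        using up lo by (simp_all add: neg_le_divide_eq neg_divide_le_eq mult.commute)
      thus ?thesis by blast
    qed
  qed
  have hc: "isCont h l0" using h_cont by (simp add: continuous_on_eq_continuous_at)
  have t1: "((\<lambda>\<mu>. min (h \<mu>) (h l0)) \<longlongrightarrow> h l0) (at l0)"
    using tendsto_min[OF hc[unfolded isCont_def] tendsto_const[of "h l0"]] by simp
  have t2: "((\<lambda>\<mu>. max (h \<mu>) (h l0)) \<longlongrightarrow> h l0) (at l0)"
    using tendsto_max[OF hc[unfolded isCont_def] tendsto_const[of "h l0"]] by simp
  have ev: "eventually (\<lambda>\<mu>. \<mu> \<noteq> l0) (at l0)"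
    by (simp add: eventually_at_filter)
  have "((\<lambda>\<mu>. (G \<mu> - G l0) / (\<mu> - l0)) \<longlongrightarrow> h l0) (at l0)"
  proof (rule tendsto_sandwich[OF _ _ t1 t2])
    show "eventually (\<lambda>\<mu>. min (h \<mu>) (h l0) \<le> (G \<mu> - G l0) / (\<mu> - l0)) (at l0)"
      using ev by eventually_elim (use ineq in fastforce)
    show "eventually (\<lambda>\<mu>. (G \<mu> - G l0) / (\<mu> - l0) \<le> max (h \<mu>) (h l0)) (at l0)"
      using ev by eventually_elim (use ineq in fastforce)
  qed
  thus ?thesis by (simp add: has_field_derivative_iff)
qed

lemma G_concave: "concave_on UNIV G"
  unfolding concave_on_iff
proof (intro conjI ballI allI impI)
  fix x y u w :: real assume uw: "0 \<le> u" "0 \<le> w" "u + w = 1"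
  define z where "z = u *\<^sub>R x + w *\<^sub>R y"
  have "G z = u * local_lagr f \<phi> dd (X z) x + w * local_lagr f \<phi> dd (X z) y"
  proof -
    have e: "\<And>q::real. q = u * q + w * q" using uw(3) by (metis distrib_right mult_1)
    show ?thesis unfolding G_def local_lagr_def z_def
      by (subst e[of "f (X (u *\<^sub>R x + w *\<^sub>R y))"]) (simp add: algebra_simps)
  qed
  also have "\<dots> \<ge> u * G x + w * G y"
    unfolding G_def using uw X_min[OF X_in, of x z] X_min[OF X_in, of y z]
    by (intro add_mono mult_left_mono) auto
  finally show "u * G x + w * G y \<le> G (u *\<^sub>R x + w *\<^sub>R y)" by (simp add: z_def)
qed simp


lemma result:
  "\<exists>H. (\<forall>l. ((\<lambda>l. local_lagr f \<phi> dd (xhat f \<phi> a b l) l) has_real_derivative H l) (at l)) \<and> continuous_on UNIV H"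
  "concave_on UNIV (\<lambda>l. local_lagr f \<phi> dd (xhat f \<phi> a b l) l)"
proof -
  have eq: "(\<lambda>l. local_lagr f \<phi> dd (xhat f \<phi> a b l) l) = G"
    by (simp add: fun_eq_iff G_def X_def)
  show "\<exists>H. (\<forall>l. ((\<lambda>l. local_lagr f \<phi> dd (xhat f \<phi> a b l) l) has_real_derivative H l) (at l)) \<and> continuous_on UNIV H"
    unfolding eq using G_deriv h_cont by blast
  show "concave_on UNIV (\<lambda>l. local_lagr f \<phi> dd (xhat f \<phi> a b l) l)"
    unfolding eq by (rule G_concave)
qed

end


lemma concave_sum_fin:
  assumes "finite I" "\<And>i. i \<in> I \<Longrightarrow> concave_on UNIV (g i)"
  shows "concave_on (UNIV::real set) (\<lambda>x. \<Sum>i\<in>I. g i x)"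
  using assms
proof (induction I rule: finite_induct)
  case empty thus ?case by (simp add: concave_on_const)
next
  case (insert j I)
  have "concave_on UNIV (\<lambda>x. g j x + (\<Sum>i\<in>I. g i x))"
    using insert by (intro concave_on_add) auto
  thus ?case using insert by simp
qed

lemma C1_real_iff:
  fixes g :: "real \<Rightarrow> real"
  assumes "\<And>l. (g has_real_derivative H l) (at l)" "continuous_on UNIV H"
  shows "g C1_differentiable_on UNIV"
  unfolding C1_differentiable_on_def
  using assms by (auto simp: has_real_derivative_iff_has_vector_derivative)

theorem lemma3:
  fixes N :: nat
    and f \<phi> :: "nat \<Rightarrow> real \<Rightarrow> real"
    and d xl xu :: "nat \<Rightarrow> real"
  assumes nonempty: "\<And>i. i \<in> {1..N} \<Longrightarrow> xl i \<le> xu i"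
    and f_C1: "\<And>i. i \<in> {1..N} \<Longrightarrow> f i C1_differentiable_on UNIV"
    and phi_C1: "\<And>i. i \<in> {1..N} \<Longrightarrow> \<phi> i C1_differentiable_on UNIV"
    and f_strict_convex: "\<And>i. i \<in> {1..N} \<Longrightarrow> strict_convex_on {xl i..xu i} (f i)"
    and phi_convex: "\<And>i. i \<in> {1..N} \<Longrightarrow> convex_on {xl i..xu i} (\<phi> i)"
    and phi_deriv_lt1: "\<And>i x. i \<in> {1..N} \<Longrightarrow> x \<in> {xl i..xu i} \<Longrightarrow> deriv (\<phi> i) x < 1"
    and f_deriv_pos: "\<And>i x. i \<in> {1..N} \<Longrightarrow> x \<in> {xl i..xu i} \<Longrightarrow> deriv (f i) x > 0"
  shows "gm N f \<phi> d xl xu C1_differentiable_on UNIV \<and> concave_on UNIV (gm N f \<phi> d xl xu)"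
proof -
  define g where "g i l = local_lagr (f i) (\<phi> i) (d i) (xhat (f i) (\<phi> i) (xl i) (xu i) l) l" for i l
  have gm_eq: "gm N f \<phi> d xl xu = (\<lambda>l. \<Sum>i\<in>{1..N}. g i l)"
    by (simp add: fun_eq_iff gm_def g_def)
  have each: "(\<exists>H. (\<forall>l. (g i has_real_derivative H l) (at l)) \<and> continuous_on UNIV H) \<and> concave_on UNIV (g i)"
    if i: "i \<in> {1..N}" for i
  proof -
    obtain F where F: "\<And>x. (f i has_vector_derivative F x) (at x)" "continuous_on UNIV F"
      using f_C1[OF i] unfolding C1_differentiable_on_def by blast
    obtain P where P: "\<And>x. (\<phi> i has_vector_derivative P x) (at x)" "continuous_on UNIV P"
      using phi_C1[OF i] unfolding C1_differentiable_on_def by blast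
    have fD: "\<And>x. (f i has_real_derivative F x) (at x)"
      using F(1) by (simp add: has_real_derivative_iff_has_vector_derivative)
    have pD: "\<And>x. (\<phi> i has_real_derivative P x) (at x)"
      using P(1) by (simp add: has_real_derivative_iff_has_vector_derivative)
    interpret c: comp "f i" "\<phi> i" "d i" "xl i" "xu i" F P
    proof
      show "xl i \<le> xu i" by (rule nonempty[OF i])
      show "\<And>x. (f i has_real_derivative F x) (at x)" by (rule fD)
      show "continuous_on UNIV F" by (rule F(2))
      show "\<And>x. (\<phi> i has_real_derivative P x) (at x)" by (rule pD)
      show "continuous_on UNIV P" by (rule P(2))
      show "strict_convex_on {xl i..xu i} (f i)" by (rule f_strict_convex[OF i])
      show "convex_on {xl i..xu i} (\<phi> i)" by (rule phi_convex[OF i])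
      show "\<And>x. x \<in> {xl i..xu i} \<Longrightarrow> P x < 1"
        using phi_deriv_lt1[OF i] DERIV_imp_deriv[OF pD] by metis
      show "\<And>x. x \<in> {xl i..xu i} \<Longrightarrow> 0 < F x"
        using f_deriv_pos[OF i] DERIV_imp_deriv[OF fD] by metis
    qed
    show ?thesis using c.result unfolding g_def by blast
  qed
  obtain H where H: "\<And>i l. i \<in> {1..N} \<Longrightarrow> (g i has_real_derivative H i l) (at l)"
    "\<And>i. i \<in> {1..N} \<Longrightarrow> continuous_on UNIV (H i)"
    using bchoice[of "{1..N}" "\<lambda>i H. (\<forall>l. (g i has_real_derivative H l) (at l)) \<and> continuous_on UNIV H"] each
    by metis
  have "(\<lambda>l. \<Sum>i\<in>{1..N}. g i l) C1_differentiable_on UNIV"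
  proof (rule C1_real_iff)
    show "((\<lambda>l. \<Sum>i\<in>{1..N}. g i l) has_real_derivative (\<Sum>i\<in>{1..N}. H i l)) (at l)" for l
      by (rule DERIV_sum) (use H(1) in auto)
    show "continuous_on UNIV (\<lambda>l. \<Sum>i\<in>{1..N}. H i l)"
      by (rule continuous_on_sum) (use H(2) in auto)
  qed
  moreover have "concave_on UNIV (\<lambda>l. \<Sum>i\<in>{1..N}. g i l)"
    by (rule concave_sum_fin) (use each in auto)
  ultimately show ?thesis unfolding gm_eq by blast
qed

end
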